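(* Let $T=(V,E,\gamma,\mathrm{p})$ and $T'=(V',E',\gamma',\mathrm{p}')$ be partially controllable fault trees, where $V$ and $V'$ need not be disjoint but $E,\gamma,\mathrm{p}$ and the children relation coincide with $E',\gamma',\mathrm{p}'$ and the children relation of $T'$ on $V\cap V'$. Let $v\in\mathrm{CBE}(T)\setminus V'$ and assume $\mathrm{BE}(T)\cap\mathrm{BE}(T')=\varnothing$. Let $T''=T[v\mapsto T']$ be the quasimodular composition. Then $\mathrm{CBE}(T'')=(\mathrm{CBE}(T)\setminus\{v\})\cup\mathrm{CBE}(T')$, and as elements of $\mathcal A(\mathrm{CBE}(T''))$, \[\langle U(T'')\rangle=\langle U(T)\rangle[\mathsf F_v\mapsto\langle U(T')\rangle].\]
   Context: A partially controllable fault tree (PCFT) is a tuple $T=(V,E,\gamma,\mathrm{p})$ where $(V,E)$ is a rooted directed acyclic graph (edges point from a node to its children; root $R_T$), $\gamma\colon V\to\{\mathtt{OR},\mathtt{AND},\mathtt{BE},\mathtt{CBE}\}$ with $\gamma(v)\in\{\mathtt{BE},\mathtt{CBE}\}$ iff $v$ is a leaf, and $\mathrm{p}\colon\mathrm{BE}(T)\to[0,1]$, where $\mathrm{BE}(T)=\{v\mid\gamma(v)=\mathtt{BE}\}$ and $\mathrm{CBE}(T)=\{v\mid\gamma(v)=\mathtt{CBE}\}$. The structure function $S_T(v,\vec f,\vec c)$ for $\vec f\in\{0,1\}^{\mathrm{BE}(T)}$, $\vec c\in\{0,1\}^{\mathrm{CBE}(T)}$ is $f_v$ if $\gamma(v)=\mathtt{BE}$,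 $c_v$ if $\gamma(v)=\mathtt{CBE}$, the disjunction of $S_T(w,\vec f,\vec c)$ over children $w$ if $\gamma(v)=\mathtt{OR}$, and the conjunction if $\gamma(v)=\mathtt{AND}$. With $\vec F$ a random vector with independent coordinates, $\mathbb P(F_v=1)=\mathrm{p}(v)$, the unreliability is the function $U(T)\colon\{0,1\}^{\mathrm{CBE}(T)}\to[0,1]$, $U(T)(\vec c)=\mathbb P(S_T(R_T,\vec F,\vec c)=1)$. Quasimodular composition $T[v\mapsto T']$: the PCFT obtained from $T$ by replacing the node $v$ by the whole PCFT $T'$, i.e. removing $v$, adding the nodes and edges of $T'$ (shared nodes identified), and redirecting every edge of $T$ that pointed to $v$ to point to $R_{T'}$ instead; labels and probabilities are inherited. Squarefree polynomial algebra: for a finite set $X$, $\mathcal A(X)$ is the real algebra of formal sums $\alpha=\sum_{Y\subseteq X}\alpha_Y\prod_{x\in Y}\mathsf F_x$ with polynomial addition and multiplication subject to $\mathsf F_x^2=\mathsf F_x$, i.e. $(\alpha+\beta)_Y=\alpha_Y+\beta_Y$, $(\alpha\beta)_Y=\sum_{Y'\cup Y''=Y}\alpha_{Y'}\beta_{Y''}$; elements of $\mathcal A(X)$ are regarded as elements of $\mathcal A(X')$ for $X\subseteq X'$. For $x\in X\setminus Y$, $\alpha\in\mathcal A(X)$, $\beta\in\mathcal A(Y)$, the substitution $\alpha[\mathsf F_x\mapsto\beta]\in\mathcal A((X\setminus\{x\})\cup Y)$ is $\beta\cdot\sum_{Z\ni x}\alpha_Z\prod_{x'\in Z\setminus\{x\}}\mathsf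 F_{x'}+\sum_{Z\not\ni x}\alpha_Z\prod_{x'\in Z}\mathsf F_{x'}$. For any function $g\colon\{0,1\}^X\to\mathbb R$ there is a unique $\langle g\rangle\in\mathcal A(X)$ with $g(\vec c)=\langle g\rangle[\forall x\in X\colon\mathsf F_x\mapsto c_x]$ for all $\vec c$; in particular $\langle U(T)\rangle\in\mathcal A(\mathrm{CBE}(T))$. *)

theory Defs
  imports Complex_Main
begin

datatype gate = GOr | GAnd | GBE | GCBE

text \<open>A PCFT T = (V, E, gamma, p) with its root R_T recorded explicitly.
  Edges point from a node to its children. The probability function is total on the
  node type but only its values on BE(T) are meaningful.\<close>
record 'a pcft =
  nodes :: "'a set"
  edges :: "('a \<times> 'a) set"
  lab   :: "'a \<Rightarrow> gate"
  prob  :: "'a \<Rightarrow> real"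
  root  :: "'a"

definition is_pcft :: "'a pcft \<Rightarrow> bool" where
  "is_pcft T \<longleftrightarrow>
     finite (nodes T) \<and>
     edges T \<subseteq> nodes T \<times> nodes T \<and>
     acyclic (edges T) \<and>
     root T \<in> nodes T \<and>
     (\<forall>u\<in>nodes T. (root T, u) \<in> (edges T)\<^sup>*) \<and>
     (\<forall>u\<in>nodes T. (lab T u \<in> {GBE, GCBE}) \<longleftrightarrow> (\<forall>w. (u, w) \<notin> edges T)) \<and>
     (\<forall>u\<in>nodes T. lab T u = GBE \<longrightarrow> 0 \<le> prob T u \<and> prob T u \<le> 1)"

definition BE :: "'a pcft \<Rightarrow> 'a set" where
  "BE T = {u \<in> nodes T. lab T u = GBE}"

definition CBE :: "'a pcft \<Rightarrow> 'a set" where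
  "CBE T = {u \<in> nodes T. lab T u = GCBE}"

text \<open>Structure function, computed by recursion with fuel; since the graph is a finite
  DAG, fuel card V suffices to reach every leaf below any node.\<close>
fun sf_fuel :: "'a pcft \<Rightarrow> nat \<Rightarrow> ('a \<Rightarrow> bool) \<Rightarrow> ('a \<Rightarrow> bool) \<Rightarrow> 'a \<Rightarrow> bool" where
  "sf_fuel T 0 f c u = False"
| "sf_fuel T (Suc n) f c u =
     (case lab T u of
        GBE \<Rightarrow> f u
      | GCBE \<Rightarrow> c u
      | GOr \<Rightarrow> (\<exists>w. (u, w) \<in> edges T \<and> sf_fuel T n f c w)
      | GAnd \<Rightarrow> (\<forall>w. (u, w) \<in> edges T \<longrightarrow> sf_fuel T n f c w))"

definition S :: "'a pcft \<Rightarrow> 'a \<Rightarrow> ('a \<Rightarrow> bool) \<Rightarrow> ('a \<Rightarrow> bool) \<Rightarrow> bool" where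
  "S T u f c = sf_fuel T (card (nodes T)) f c u"

text \<open>Unreliability: probability that the root fails, the F_b being independent
  Bernoulli(p b) variables; written as the finite sum over the set A of failed BEs.\<close>
definition U :: "'a pcft \<Rightarrow> ('a \<Rightarrow> bool) \<Rightarrow> real" where
  "U T c = (\<Sum>A\<in>Pow (BE T).
      (\<Prod>b\<in>A. prob T b) * (\<Prod>b\<in>BE T - A. 1 - prob T b) *
      (if S T (root T) (\<lambda>b. b \<in> A) c then 1 else 0))"

definition compose :: "'a pcft \<Rightarrow> 'a \<Rightarrow> 'a pcft \<Rightarrow> 'a pcft" where
  "compose T v T' =
     \<lparr> nodes = (nodes T - {v}) \<union> nodes T',
       edges = {(a, if b = v then root T' else b) | a b. (a, b) \<in> edges T} \<union> edges T',
       lab = (\<lambda>u. if u \<in> nodes T' then lab T' u else lab T u),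
       prob = (\<lambda>u. if u \<in> nodes T' then prob T' u else prob T u),
       root = (if root T = v then root T' else root T) \<rparr>"

text \<open>An element of A(X) is represented by its coefficient function Y \<mapsto> alpha_Y,
  which vanishes outside Pow X (so A(X) \<subseteq> A(X') for X \<subseteq> X').\<close>
type_synonym 'a sqpoly = "'a set \<Rightarrow> real"

definition in_alg :: "'a set \<Rightarrow> 'a sqpoly \<Rightarrow> bool" where
  "in_alg X \<alpha> \<longleftrightarrow> (\<forall>Y. \<alpha> Y \<noteq> 0 \<longrightarrow> Y \<subseteq> X)"

definition sq_add :: "'a sqpoly \<Rightarrow> 'a sqpoly \<Rightarrow> 'a sqpoly" where
  "sq_add \<alpha> \<beta> = (\<lambda>Y. \<alpha> Y + \<beta> Y)"

definition sq_mult :: "'a sqpoly \<Rightarrow> 'a sqpoly \<Rightarrow> 'a sqpoly" where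
  "sq_mult \<alpha> \<beta> = (\<lambda>Y. \<Sum>(Y1, Y2)\<in>{(Y1, Y2). Y1 \<subseteq> Y \<and> Y2 \<subseteq> Y \<and> Y1 \<union> Y2 = Y}.
                       \<alpha> Y1 * \<beta> Y2)"

definition sq_subst :: "'a sqpoly \<Rightarrow> 'a \<Rightarrow> 'a sqpoly \<Rightarrow> 'a sqpoly" where
  "sq_subst \<alpha> x \<beta> =
     sq_add (sq_mult \<beta> (\<lambda>W. if x \<notin> W then \<alpha> (insert x W) else 0))
            (\<lambda>W. if x \<notin> W then \<alpha> W else 0)"

definition sq_eval :: "'a set \<Rightarrow> 'a sqpoly \<Rightarrow> ('a \<Rightarrow> bool) \<Rightarrow> real" where
  "sq_eval X \<alpha> c = (\<Sum>Y\<in>Pow X. \<alpha> Y * (\<Prod>x\<in>Y. if c x then 1 else 0))"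

definition rep :: "'a set \<Rightarrow> (('a \<Rightarrow> bool) \<Rightarrow> real) \<Rightarrow> 'a sqpoly" where
  "rep X g = (THE \<alpha>. in_alg X \<alpha> \<and> (\<forall>c. g c = sq_eval X \<alpha> c))"

end

theory Submission
  imports Defs
begin


lemma ind_prod: "finite Y \<Longrightarrow> (\<Prod>x\<in>Y. if c x then 1 else 0 :: real) = (if \<forall>x\<in>Y. c x then 1 else 0)"
  by (induction Y rule: finite_induct) auto

lemma sum_Pow_insert:
  assumes "finite X" "x \<notin> X"
  shows "(\<Sum>Y\<in>Pow (insert x X). h Y) = (\<Sum>Y\<in>Pow X. h Y) + (\<Sum>Y\<in>Pow X. h (insert x Y)) "
proof -
  have d: "Pow X \<inter> insert x ` Pow X = {}" using assms by auto
  have i: "inj_on (insert x) (Pow X)" using assms unfolding inj_on_def by (metis PowD insert_ident subsetD)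
  show ?thesis unfolding Pow_insert
    by (subst sum.union_disjoint) (use assms d i in \<open>auto simp: sum.reindex\<close>)
qed

lemma sq_eval_mono:
  assumes "in_alg Y a" "Y \<subseteq> Z" "finite Z"
  shows "sq_eval Y a c = sq_eval Z a c"
  unfolding sq_eval_def
  apply (rule sum.mono_neutral_left)
  using assms by (auto simp: in_alg_def)

lemma in_alg_mono: "in_alg Y a \<Longrightarrow> Y \<subseteq> Z \<Longrightarrow> in_alg Z a"
  unfolding in_alg_def by blast

lemma in_alg_add: "in_alg X a \<Longrightarrow> in_alg X b \<Longrightarrow> in_alg X (sq_add a b)"
  unfolding in_alg_def sq_add_def
proof (intro allI impI)
  fix Y assume "\<forall>Y. a Y \<noteq> 0 \<longrightarrow> Y \<subseteq> X" "\<forall>Y. b Y \<noteq> 0 \<longrightarrow> Y \<subseteq> X" "a Y + b Y \<noteq> 0"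
  then show "Y \<subseteq> X" by (cases "a Y = 0") auto
qed

lemma in_alg_mult: "in_alg X a \<Longrightarrow> in_alg X b \<Longrightarrow> in_alg X (sq_mult a b)"
  unfolding in_alg_def sq_mult_def
proof (intro allI impI, rule ccontr)
  fix Y assume A: "\<forall>Y. a Y \<noteq> 0 \<longrightarrow> Y \<subseteq> X" "\<forall>Y. b Y \<noteq> 0 \<longrightarrow> Y \<subseteq> X"
    and ne: "(\<Sum>(Y1, Y2)\<in>{(Y1, Y2). Y1 \<subseteq> Y \<and> Y2 \<subseteq> Y \<and> Y1 \<union> Y2 = Y}. a Y1 * b Y2) \<noteq> 0"
    and n: "\<not> Y \<subseteq> X"
  have "(\<Sum>(Y1, Y2)\<in>{(Y1, Y2). Y1 \<subseteq> Y \<and> Y2 \<subseteq> Y \<and> Y1 \<union> Y2 = Y}. a Y1 * b Y2) = 0"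
    apply (rule sum.neutral) using A n by auto
  with ne show False by simp
qed

lemma sq_eval_add: "sq_eval X (sq_add a b) c = sq_eval X a c + sq_eval X b c"
  unfolding sq_eval_def sq_add_def by (simp add: sum.distrib ring_distribs)

lemma sq_eval_mult:
  assumes fin: "finite X"
  shows "sq_eval X (sq_mult a b) c = sq_eval X a c * sq_eval X b c"
proof -
  let ?i = "\<lambda>Y. (if \<forall>x\<in>Y. c x then 1 else 0 :: real)"
  have fY: "\<And>Y. Y \<in> Pow X \<Longrightarrow> finite Y" using fin finite_subset by auto
  have "sq_eval X a c * sq_eval X b c = (\<Sum>Y1\<in>Pow X. \<Sum>Y2\<in>Pow X. (a Y1 * ?i Y1) * (b Y2 * ?i Y2))"
    unfolding sq_eval_def sum_product
    by (intro sum.cong refl) (simp add: ind_prod fY)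
  also have "\<dots> = (\<Sum>p\<in>Pow X \<times> Pow X. a (fst p) * b (snd p) * ?i (fst p \<union> snd p))"
    unfolding sum.cartesian_product by (intro sum.cong refl) auto
  also have "\<dots> = (\<Sum>Y\<in>Pow X. \<Sum>p\<in>{p. p \<in> Pow X \<times> Pow X \<and> fst p \<union> snd p = Y}. a (fst p) * b (snd p) * ?i (fst p \<union> snd p))"
    by (rule sum.group[symmetric]) (use fin in auto)
  also have "\<dots> = (\<Sum>Y\<in>Pow X. sq_mult a b Y * ?i Y)"
  proof (intro sum.cong refl)
    fix Y assume Y: "Y \<in> Pow X"
    have e: "{p. p \<in> Pow X \<times> Pow X \<and> fst p \<union> snd p = Y} = {(Y1, Y2). Y1 \<subseteq> Y \<and> Y2 \<subseteq> Y \<and> Y1 \<union> Y2 = Y}"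
      using Y by auto
    show "(\<Sum>p\<in>{p. p \<in> Pow X \<times> Pow X \<and> fst p \<union> snd p = Y}. a (fst p) * b (snd p) * ?i (fst p \<union> snd p)) = sq_mult a b Y * ?i Y"
      unfolding e sq_mult_def sum_distrib_right
      by (intro sum.cong refl) auto
  qed
  also have "\<dots> = sq_eval X (sq_mult a b) c"
    unfolding sq_eval_def by (intro sum.cong refl) (simp add: ind_prod fY)
  finally show ?thesis by simp
qed

lemma sq_eval_zero:
  assumes fin: "finite X" and alg: "in_alg X d" and z: "\<forall>c. sq_eval X d c = 0"
  shows "d = (\<lambda>_. 0)"
proof (rule ccontr)
  assume "d \<noteq> (\<lambda>_. 0)"
  then obtain Y0 where "d Y0 \<noteq> 0" by auto
  from ex_has_least_nat[of "\<lambda>Y. d Y \<noteq> 0", OF this, of card]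
  obtain Y where Y: "d Y \<noteq> 0" and mn: "\<And>Z. d Z \<noteq> 0 \<Longrightarrow> card Y \<le> card Z"
    by blast
  have YX: "Y \<subseteq> X" using Y alg unfolding in_alg_def by auto
  have fY: "finite Y" using YX fin finite_subset by auto
  have "sq_eval X d (\<lambda>x. x \<in> Y) = (\<Sum>Z\<in>Pow X. if Z = Y then d Y else 0)"
    unfolding sq_eval_def
  proof (intro sum.cong refl)
    fix Z assume Z: "Z \<in> Pow X"
    have fZ: "finite Z" using Z fin finite_subset by auto
    show "d Z * (\<Prod>x\<in>Z. if x \<in> Y then 1 else 0) = (if Z = Y then d Y else 0)"
    proof (cases "Z \<subseteq> Y")
      case True
      show ?thesis
      proof (cases "Z = Y")
        case False
        with True have "Z \<subset> Y" by auto
        then have "card Z < card Y" using fY psubset_card_mono by auto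
        then have "d Z = 0" using mn by (meson not_le)
        then show ?thesis using False by simp
      qed simp
    next
      case False
      then have "Z \<noteq> Y" by auto
      have "\<not> (\<forall>x\<in>Z. x \<in> Y)" using False by blast
      with \<open>Z \<noteq> Y\<close> show ?thesis by (auto simp add: ind_prod fZ)
    qed
  qed
  also have "\<dots> = d Y" using YX fin by (simp add: sum.delta)
  finally show False using z Y by simp
qed

lemma sq_eval_diff: "sq_eval X (\<lambda>Y. a Y - b Y) c = sq_eval X a c - sq_eval X b c"
  unfolding sq_eval_def by (simp add: sum_subtractf left_diff_distrib)

lemma rep_unique:
  assumes "finite X" "in_alg X a" "in_alg X b" "\<forall>c. sq_eval X a c = sq_eval X b c"
  shows "a = b"
proof -
  have "(\<lambda>Y. a Y - b Y) = (\<lambda>_. 0)"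
  proof (rule sq_eval_zero[OF assms(1)])
    show "in_alg X (\<lambda>Y. a Y - b Y)" unfolding in_alg_def
    proof (intro allI impI)
      fix Y assume "a Y - b Y \<noteq> 0"
      then have "a Y \<noteq> 0 \<or> b Y \<noteq> 0" by auto
      then show "Y \<subseteq> X" using assms(2,3) unfolding in_alg_def by blast
    qed
    show "\<forall>c. sq_eval X (\<lambda>Y. a Y - b Y) c = 0" using assms(4) by (simp add: sq_eval_diff)
  qed
  then have "\<And>Y. a Y - b Y = 0" by (rule fun_cong)
  then show ?thesis by (intro ext) simp
qed

definition local_on :: "'a set \<Rightarrow> (('a \<Rightarrow> bool) \<Rightarrow> real) \<Rightarrow> bool" where
  "local_on X g \<longleftrightarrow> (\<forall>c d. (\<forall>x\<in>X. c x = d x) \<longrightarrow> g c = g d)"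

lemma rep_exists:
  assumes "finite X"
  shows "local_on X g \<Longrightarrow> \<exists>a. in_alg X a \<and> (\<forall>c. g c = sq_eval X a c)"
  using assms
proof (induction X arbitrary: g rule: finite_induct)
  case empty
  show ?case
  proof (intro exI conjI allI)
    show "in_alg {} (\<lambda>Y. if Y = {} then g (\<lambda>_. False) else 0)" unfolding in_alg_def by auto
    fix c
    have "g c = g (\<lambda>_. False)" using empty(1) unfolding local_on_def by auto
    then show "g c = sq_eval {} (\<lambda>Y. if Y = {} then g (\<lambda>_. False) else 0) c"
      unfolding sq_eval_def by simp
  qed
next
  case (insert x X)
  have l1: "local_on X (\<lambda>c. g (c(x := True)))" and l0: "local_on X (\<lambda>c. g (c(x := False)))"
    using insert(4) unfolding local_on_def by auto
  obtain a1 where a1: "in_alg X a1" "\<forall>c. g (c(x := True)) = sq_eval X a1 c"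
    using insert(3)[OF l1] by blast
  obtain a0 where a0: "in_alg X a0" "\<forall>c. g (c(x := False)) = sq_eval X a0 c"
    using insert(3)[OF l0] by blast
  define a where "a = (\<lambda>Y. if x \<in> Y then a1 (Y - {x}) - a0 (Y - {x}) else a0 Y)"
  show ?case
  proof (intro exI conjI allI)
    show "in_alg (insert x X) a"
      unfolding in_alg_def
    proof (intro allI impI)
      fix Y assume ne: "a Y \<noteq> 0"
      show "Y \<subseteq> insert x X"
      proof (cases "x \<in> Y")
        case True
        then have "a1 (Y - {x}) \<noteq> 0 \<or> a0 (Y - {x}) \<noteq> 0" using ne unfolding a_def by auto
        then have "Y - {x} \<subseteq> X" using a1(1) a0(1) unfolding in_alg_def by blast
        then show ?thesis by blast
      next
        case False
        then have "a0 Y \<noteq> 0" using ne unfolding a_def by auto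
        then show ?thesis using a0(1) unfolding in_alg_def by blast
      qed
    qed
    fix c
    have fY: "\<And>Y. Y \<in> Pow X \<Longrightarrow> finite Y" using insert(1) finite_subset by auto
    have "sq_eval (insert x X) a c = (\<Sum>Y\<in>Pow X. a Y * (\<Prod>x\<in>Y. if c x then 1 else 0))
        + (\<Sum>Y\<in>Pow X. a (insert x Y) * (\<Prod>x\<in>insert x Y. if c x then 1 else 0))"
      unfolding sq_eval_def by (rule sum_Pow_insert) (use insert in auto)
    also have "(\<Sum>Y\<in>Pow X. a Y * (\<Prod>x\<in>Y. if c x then 1 else 0)) = sq_eval X a0 c"
      unfolding sq_eval_def a_def by (intro sum.cong refl) (use insert(2) in auto)
    also have "(\<Sum>Y\<in>Pow X. a (insert x Y) * (\<Prod>x\<in>insert x Y. if c x then 1 else 0))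
        = (if c x then 1 else 0) * (sq_eval X a1 c - sq_eval X a0 c)"
      unfolding sq_eval_diff[symmetric] unfolding sq_eval_def sum_distrib_left
    proof (intro sum.cong refl)
      fix Y assume Y: "Y \<in> Pow X"
      then have xY: "x \<notin> Y" using insert(2) by auto
      have "insert x Y - {x} = Y" using xY by auto
      then show "a (insert x Y) * (\<Prod>x\<in>insert x Y. if c x then 1 else 0) =
          (if c x then 1 else 0) * ((a1 Y - a0 Y) * (\<Prod>x\<in>Y. if c x then 1 else 0))"
        unfolding a_def using xY fY[OF Y] by simp
    qed
    finally have ev: "sq_eval (insert x X) a c = sq_eval X a0 c + (if c x then 1 else 0) * (sq_eval X a1 c - sq_eval X a0 c)" .
    have "g c = (if c x then g (c(x := True)) else g (c(x := False)))"
      by (cases "c x") (simp_all add: fun_upd_idem)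
    then show "g c = sq_eval (insert x X) a c" unfolding ev using a1(2) a0(2) by simp
  qed
qed

lemma rep_prop:
  assumes "finite X" "local_on X g"
  shows "in_alg X (rep X g) \<and> (\<forall>c. g c = sq_eval X (rep X g) c)"
proof -
  obtain a where a: "in_alg X a" "\<forall>c. g c = sq_eval X a c" using rep_exists assms by blast
  have "rep X g = a" unfolding rep_def
    apply (rule the_equality) using a apply simp
    using rep_unique[OF assms(1)] a by metis
  then show ?thesis using a by simp
qed

lemma rep_eq:
  assumes "finite X" "in_alg X a" "\<forall>c. g c = sq_eval X a c"
  shows "rep X g = a"
  unfolding rep_def
  apply (rule the_equality) using assms apply simp
  using rep_unique[OF assms(1)] assms by metis



definition dag :: "'a pcft \<Rightarrow> bool" where
  "dag T \<longleftrightarrow> finite (nodes T) \<and> edges T \<subseteq> nodes T \<times> nodes T \<and> acyclic (edges T) \<and> nodes T \<noteq> {}"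

lemma pcft_dag: "is_pcft T \<Longrightarrow> dag T"
  unfolding is_pcft_def dag_def by auto

lemma no_long_path:
  assumes d: "dag T" and n: "card (nodes T) \<le> n"
  shows "(u, w) \<notin> (edges T) ^^ n"
proof
  assume "(u, w) \<in> (edges T) ^^ n"
  then obtain f where f0: "f 0 = u" and fn: "f n = w" and st: "\<forall>i<n. (f i, f (Suc i)) \<in> edges T"
    unfolding relpow_fun_conv by blast
  have fin: "finite (nodes T)" and sub: "edges T \<subseteq> nodes T \<times> nodes T"
    and ac: "acyclic (edges T)" and ne: "nodes T \<noteq> {}" using d unfolding dag_def by auto
  have "card (nodes T) > 0" using fin ne by (simp add: card_gt_0_iff)
  then have n1: "n \<ge> 1" using n by simp
  have img: "f ` {0..n} \<subseteq> nodes T"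
  proof
    fix y assume "y \<in> f ` {0..n}"
    then obtain i where i: "i \<le> n" "y = f i" by auto
    show "y \<in> nodes T"
    proof (cases "i < n")
      case True
      then show ?thesis using st sub i by blast
    next
      case False
      then have "i = n" using i by simp
      have "n - 1 < n" "Suc (n - 1) = n" using n1 by auto
      then have "(f (n - 1), f i) \<in> edges T" using st \<open>i = n\<close> by metis
      then show ?thesis using sub i by blast
    qed
  qed
  have "\<not> inj_on f {0..n}"
  proof
    assume "inj_on f {0..n}"
    then have "card {0..n} \<le> card (nodes T)" using card_inj_on_le[OF _ img fin] by blast
    then show False using n by simp
  qed
  then obtain i j where ij: "i \<in> {0..n}" "j \<in> {0..n}" "i \<noteq> j" "f i = f j"
    unfolding inj_on_def by blast
  obtain a b where ab: "a < b" "b \<le> n" "f a = f b"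
    using ij by (metis atLeastAtMost_iff linorder_neqE_nat)
  have "(f a, f b) \<in> (edges T) ^^ (b - a)"
    unfolding relpow_fun_conv
  proof (rule exI[of _ "\<lambda>k. f (a + k)"], intro conjI allI impI)
    show "f (a + 0) = f a" by simp
    show "f (a + (b - a)) = f b" using ab by simp
    fix i assume "i < b - a"
    then have "a + i < n" using ab by linarith
    then show "(f (a + i), f (a + Suc i)) \<in> edges T" using st by (metis add_Suc_right)
  qed
  moreover have "b - a > 0" using ab by simp
  ultimately have "(f a, f b) \<in> (edges T)\<^sup>+" unfolding trancl_power by blast
  then have "(f a, f a) \<in> (edges T)\<^sup>+" using ab by simp
  then show False using ac unfolding acyclic_def by blast
qed

lemma sf_stab:
  "(\<forall>w. (u, w) \<notin> (edges T) ^^ k) \<Longrightarrow> k \<le> n \<Longrightarrow> k \<le> m \<Longrightarrow> sf_fuel T n f c u = sf_fuel T m f c u"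
proof (induction k arbitrary: u n m)
  case 0
  then show ?case by auto
next
  case (Suc k)
  obtain n' where n': "n = Suc n'" "k \<le> n'" using Suc.prems(2) by (cases n) auto
  obtain m' where m': "m = Suc m'" "k \<le> m'" using Suc.prems(3) by (cases m) auto
  have ch: "\<And>w. (u, w) \<in> edges T \<Longrightarrow> sf_fuel T n' f c w = sf_fuel T m' f c w"
  proof -
    fix w assume uw: "(u, w) \<in> edges T"
    have "\<forall>z. (w, z) \<notin> (edges T) ^^ k" using Suc.prems(1) relpow_Suc_I2[OF uw] by blast
    then show "sf_fuel T n' f c w = sf_fuel T m' f c w" using Suc.IH n' m' by blast
  qed
  show ?case unfolding n' m' using ch by (cases "lab T u") auto
qed

lemma S_stable: "dag T \<Longrightarrow> card (nodes T) \<le> n \<Longrightarrow> sf_fuel T n f c u = S T u f c"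
  unfolding S_def
proof (rule sf_stab[where k="card (nodes T)"])
  assume "dag T"
  then show "\<forall>w. (u, w) \<notin> edges T ^^ card (nodes T)" using no_long_path[of T "card (nodes T)"] by blast
qed auto

lemma S_unfold:
  assumes "dag T"
  shows "S T u f c = (case lab T u of GBE \<Rightarrow> f u | GCBE \<Rightarrow> c u
     | GOr \<Rightarrow> (\<exists>w. (u, w) \<in> edges T \<and> S T w f c)
     | GAnd \<Rightarrow> (\<forall>w. (u, w) \<in> edges T \<longrightarrow> S T w f c))"
proof -
  have e: "S T u f c = sf_fuel T (Suc (card (nodes T))) f c u"
    using S_stable[OF assms, of "Suc (card (nodes T))" f c u] by linarith
  have e2: "\<And>w. sf_fuel T (card (nodes T)) f c w = S T w f c" unfolding S_def ..
  show ?thesis unfolding e sf_fuel.simps e2 ..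
qed

lemma sf_local:
  assumes sub: "edges T \<subseteq> nodes T \<times> nodes T"
    and fg: "\<forall>x\<in>BE T. f x = g x" and cd: "\<forall>x\<in>CBE T. c x = d x"
  shows "u \<in> nodes T \<Longrightarrow> sf_fuel T n f c u = sf_fuel T n g d u"
proof (induction n arbitrary: u)
  case 0
  then show ?case by simp
next
  case (Suc n)
  have ch: "\<And>w. (u, w) \<in> edges T \<Longrightarrow> sf_fuel T n f c w = sf_fuel T n g d w"
    using Suc.IH sub by blast
  show ?case
  proof (cases "lab T u")
    case GBE then show ?thesis using fg Suc.prems by (simp add: BE_def)
  next
    case GCBE then show ?thesis using cd Suc.prems by (simp add: CBE_def)
  qed (use ch in auto)
qed

lemma S_local:
  assumes "dag T" "u \<in> nodes T" "\<forall>x\<in>BE T. f x = g x" "\<forall>x\<in>CBE T. c x = d x"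
  shows "S T u f c = S T u g d"
  unfolding S_def by (rule sf_local) (use assms in \<open>auto simp: dag_def\<close>)

lemma U_local:
  assumes "is_pcft T"
  shows "local_on (CBE T) (U T)"
  unfolding local_on_def U_def
proof (intro allI impI sum.cong refl)
  fix c d :: "'a \<Rightarrow> bool" and A assume "\<forall>x\<in>CBE T. c x = d x"
  then have "S T (root T) (\<lambda>b. b \<in> A) c = S T (root T) (\<lambda>b. b \<in> A) d"
    using S_local[OF pcft_dag[OF assms]] assms unfolding is_pcft_def by blast
  then show "(\<Prod>b\<in>A. prob T b) * (\<Prod>b\<in>BE T - A. 1 - prob T b) * (if S T (root T) (\<lambda>b. b \<in> A) c then 1 else 0) =
         (\<Prod>b\<in>A. prob T b) * (\<Prod>b\<in>BE T - A. 1 - prob T b) * (if S T (root T) (\<lambda>b. b \<in> A) d then 1 else 0)"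
    by simp
qed



locale cset =
  fixes T T' :: "'a pcft" and v :: 'a
  assumes P: "is_pcft T" and P': "is_pcft T'"
    and agree: "\<forall>u\<in>nodes T \<inter> nodes T'. lab T u = lab T' u \<and>
           (\<forall>w. (u, w) \<in> edges T \<longleftrightarrow> (u, w) \<in> edges T') \<and>
           (lab T u = GBE \<longrightarrow> prob T u = prob T' u)"
    and vC: "v \<in> CBE T" and vn: "v \<notin> nodes T'"
    and disj: "BE T \<inter> BE T' = {}"
begin

abbreviation "T2 \<equiv> compose T v T'"

lemma subE: "edges T \<subseteq> nodes T \<times> nodes T" using P unfolding is_pcft_def by auto
lemma subE': "edges T' \<subseteq> nodes T' \<times> nodes T'" using P' unfolding is_pcft_def by auto
lemma finN: "finite (nodes T)" using P unfolding is_pcft_def by auto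
lemma finN': "finite (nodes T')" using P' unfolding is_pcft_def by auto
lemma v_node: "v \<in> nodes T" "lab T v = GCBE" using vC unfolding CBE_def by auto
lemma v_leaf: "(v, w) \<notin> edges T"
  using P v_node unfolding is_pcft_def by auto
lemma root_in: "root T \<in> nodes T" using P unfolding is_pcft_def by auto
lemma root'_in: "root T' \<in> nodes T'" using P' unfolding is_pcft_def by auto
lemma dagT: "dag T" using pcft_dag[OF P] .
lemma dagT': "dag T'" using pcft_dag[OF P'] .

lemma nodes2: "nodes T2 = (nodes T - {v}) \<union> nodes T'" by (simp add: compose_def)
lemma edges2: "edges T2 = {(a, if b = v then root T' else b) | a b. (a, b) \<in> edges T} \<union> edges T'"
  by (simp add: compose_def)
lemma lab2: "lab T2 u = (if u \<in> nodes T' then lab T' u else lab T u)" by (simp add: compose_def)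
lemma prob2: "prob T2 u = (if u \<in> nodes T' then prob T' u else prob T u)" by (simp add: compose_def)
lemma root2: "root T2 = (if root T = v then root T' else root T)" by (simp add: compose_def)

lemma shared: "u \<in> nodes T \<Longrightarrow> u \<in> nodes T' \<Longrightarrow> (u, w) \<in> edges T \<longleftrightarrow> (u, w) \<in> edges T'"
  using agree by blast

lemma e2_T': "x \<in> nodes T' \<Longrightarrow> (x, w) \<in> edges T2 \<longleftrightarrow> (x, w) \<in> edges T'"
proof
  assume x: "x \<in> nodes T'" and xw: "(x, w) \<in> edges T2"
  show "(x, w) \<in> edges T'"
  proof (cases "(x, w) \<in> edges T'")
    case False
    then obtain b where b: "(x, b) \<in> edges T" "w = (if b = v then root T' else b)"
      using xw unfolding edges2 by blast
    have "x \<in> nodes T" using b subE by blast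
    then have "(x, b) \<in> edges T'" using shared x b by blast
    then have "b \<in> nodes T'" using subE' by blast
    then have "b \<noteq> v" using vn by blast
    then show ?thesis using b \<open>(x, b) \<in> edges T'\<close> by simp
  qed
next
  show "(x, w) \<in> edges T' \<Longrightarrow> (x, w) \<in> edges T2" unfolding edges2 by blast
qed

lemma e2_T: "x \<in> nodes T \<Longrightarrow> (x, w) \<in> edges T2 \<longleftrightarrow> (\<exists>b. (x, b) \<in> edges T \<and> w = (if b = v then root T' else b))"
proof
  assume x: "x \<in> nodes T" and xw: "(x, w) \<in> edges T2"
  show "\<exists>b. (x, b) \<in> edges T \<and> w = (if b = v then root T' else b)"
  proof (cases "(x, w) \<in> edges T'")
    case True
    then have "x \<in> nodes T'" using subE' by blast
    then have "(x, w) \<in> edges T" using shared x True by blast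
    moreover have "w \<noteq> v" using True subE' vn by blast
    ultimately show ?thesis by auto
  next
    case False
    then show ?thesis using xw unfolding edges2 by blast
  qed
next
  show "\<exists>b. (x, b) \<in> edges T \<and> w = (if b = v then root T' else b) \<Longrightarrow> (x, w) \<in> edges T2"
    unfolding edges2 by blast
qed

lemma lab2_T: "u \<in> nodes T \<Longrightarrow> lab T2 u = lab T u"
  using agree unfolding lab2 by auto

lemma lab2_T': "u \<in> nodes T' \<Longrightarrow> lab T2 u = lab T' u"
  unfolding lab2 by auto

lemma e2_out: "(x, y) \<in> edges T2 \<Longrightarrow> y \<notin> nodes T' \<Longrightarrow> (x, y) \<in> edges T"
proof -
  assume xy: "(x, y) \<in> edges T2" and y: "y \<notin> nodes T'"
  have "(x, y) \<notin> edges T'" using y subE' by blast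
  then obtain b where b: "(x, b) \<in> edges T" "y = (if b = v then root T' else b)"
    using xy unfolding edges2 by blast
  have "b \<noteq> v" using b y root'_in by auto
  then show ?thesis using b by simp
qed

lemma tr1: "(x, y) \<in> (edges T2)\<^sup>+ \<Longrightarrow> x \<in> nodes T' \<Longrightarrow> (x, y) \<in> (edges T')\<^sup>+"
proof (induction rule: trancl_induct)
  case (base y)
  then show ?case using e2_T' by blast
next
  case (step y z)
  then have yz: "(x, y) \<in> (edges T')\<^sup>+" by blast
  then have "y \<in> nodes T'" using subE' by (meson SigmaD2 subsetD tranclE)
  then have "(y, z) \<in> edges T'" using e2_T' step by blast
  then show ?case using trancl_into_trancl[OF yz] by blast
qed

lemma tr2: "(x, y) \<in> (edges T2)\<^sup>+ \<Longrightarrow> y \<notin> nodes T' \<Longrightarrow> (x, y) \<in> (edges T)\<^sup>+"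
proof (induction rule: trancl_induct)
  case (base y)
  then show ?case using e2_out by blast
next
  case (step y z)
  have "y \<notin> nodes T'"
  proof
    assume "y \<in> nodes T'"
    then have "(y, z) \<in> edges T'" using e2_T' step by blast
    then show False using step subE' by blast
  qed
  then have "(x, y) \<in> (edges T)\<^sup>+" using step by blast
  moreover have "(y, z) \<in> edges T" using e2_out step by blast
  ultimately show ?case by (rule trancl_into_trancl)
qed

lemma dag2: "dag T2"
  unfolding dag_def
proof (intro conjI)
  show "finite (nodes T2)" unfolding nodes2 using finN finN' by blast
  show "nodes T2 \<noteq> {}" unfolding nodes2 using root'_in by blast
  show "edges T2 \<subseteq> nodes T2 \<times> nodes T2"
  proof
    fix p assume p: "p \<in> edges T2"
    show "p \<in> nodes T2 \<times> nodes T2"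
    proof (cases "p \<in> edges T'")
      case True then show ?thesis using subE' unfolding nodes2 by blast
    next
      case False
      then obtain a b where ab: "(a, b) \<in> edges T" "p = (a, if b = v then root T' else b)"
        using p unfolding edges2 by blast
      have "a \<noteq> v" using v_leaf ab by blast
      then show ?thesis using ab subE root'_in unfolding nodes2 by auto
    qed
  qed
  show "acyclic (edges T2)"
    unfolding acyclic_def
  proof (intro allI notI)
    fix x assume xx: "(x, x) \<in> (edges T2)\<^sup>+"
    show False
    proof (cases "x \<in> nodes T'")
      case True
      then show False using tr1[OF xx] P' unfolding is_pcft_def acyclic_def by blast
    next
      case False
      then show False using tr2[OF xx] P unfolding is_pcft_def acyclic_def by blast
    qed
  qed
qed

lemma SA_fuel: "u \<in> nodes T' \<Longrightarrow> sf_fuel T2 n f c u = sf_fuel T' n f c u"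
proof (induction n arbitrary: u)
  case 0 then show ?case by simp
next
  case (Suc n)
  have ch: "\<And>w. (u, w) \<in> edges T2 \<longleftrightarrow> (u, w) \<in> edges T'" using e2_T' Suc.prems by blast
  have ih: "\<And>w. (u, w) \<in> edges T' \<Longrightarrow> sf_fuel T2 n f c w = sf_fuel T' n f c w"
    using Suc.IH subE' by blast
  show ?case using lab2_T'[OF Suc.prems] ch ih by (cases "lab T' u") auto
qed

lemma SA: "u \<in> nodes T' \<Longrightarrow> S T2 u f c = S T' u f c"
proof -
  assume u: "u \<in> nodes T'"
  let ?N = "card (nodes T2) + card (nodes T')"
  have "S T2 u f c = sf_fuel T2 ?N f c u" using S_stable[OF dag2, of ?N] by simp
  also have "\<dots> = sf_fuel T' ?N f c u" using SA_fuel[OF u] .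
  also have "\<dots> = S T' u f c" using S_stable[OF dagT', of ?N] by simp
  finally show ?thesis .
qed

lemma wfE: "wf ((edges T)\<inverse>)"
proof (rule finite_acyclic_wf_converse)
  show "finite (edges T)" using subE finN by (meson finite_SigmaI finite_subset)
  show "acyclic (edges T)" using P unfolding is_pcft_def by blast
qed

lemma SB: "u \<in> nodes T \<Longrightarrow> u \<noteq> v \<Longrightarrow> S T2 u f c = S T u f (c(v := S T' (root T') f c))"
proof (induction u rule: wf_induct_rule[OF wfE])
  case (1 u)
  let ?c = "c(v := S T' (root T') f c)"
  have child: "S T2 (if b = v then root T' else b) f c = S T b f ?c" if ub: "(u, b) \<in> edges T" for b
  proof (cases "b = v")
    case True
    have "S T2 (root T') f c = S T' (root T') f c" using SA root'_in by blast
    moreover have "S T v f ?c = ?c v" using S_unfold[OF dagT, of v f ?c] v_node by simp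
    ultimately show ?thesis using True by simp
  next
    case False
    have "b \<in> nodes T" using ub subE by blast
    have "(b, u) \<in> (edges T)\<inverse>" using ub by simp
    from 1(1)[OF this \<open>b \<in> nodes T\<close> False] show ?thesis using False by (simp add: fun_upd_def)
  qed
  have eq2: "S T2 u f c = (case lab T u of GBE \<Rightarrow> f u | GCBE \<Rightarrow> c u
     | GOr \<Rightarrow> (\<exists>w. (u, w) \<in> edges T2 \<and> S T2 w f c)
     | GAnd \<Rightarrow> (\<forall>w. (u, w) \<in> edges T2 \<longrightarrow> S T2 w f c))"
    using S_unfold[OF dag2, of u f c] lab2_T[OF 1(2)] by simp
  have eq1: "S T u f ?c = (case lab T u of GBE \<Rightarrow> f u | GCBE \<Rightarrow> ?c u
     | GOr \<Rightarrow> (\<exists>w. (u, w) \<in> edges T \<and> S T w f ?c)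
     | GAnd \<Rightarrow> (\<forall>w. (u, w) \<in> edges T \<longrightarrow> S T w f ?c))"
    using S_unfold[OF dagT, of u f ?c] by simp
  have E2: "\<And>w. (u, w) \<in> edges T2 \<longleftrightarrow> (\<exists>b. (u, b) \<in> edges T \<and> w = (if b = v then root T' else b))"
    using e2_T[OF 1(2)] by blast
  have or: "(\<exists>w. (u, w) \<in> edges T2 \<and> S T2 w f c) \<longleftrightarrow> (\<exists>w. (u, w) \<in> edges T \<and> S T w f ?c)"
  proof
    assume "\<exists>w. (u, w) \<in> edges T2 \<and> S T2 w f c"
    then obtain w where w: "(u, w) \<in> edges T2" "S T2 w f c" by blast
    then obtain b where b: "(u, b) \<in> edges T" "w = (if b = v then root T' else b)" using E2 by blast
    then have "S T b f ?c" using child[OF b(1)] w(2) by simp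
    then show "\<exists>w. (u, w) \<in> edges T \<and> S T w f ?c" using b(1) by blast
  next
    assume "\<exists>w. (u, w) \<in> edges T \<and> S T w f ?c"
    then obtain b where b: "(u, b) \<in> edges T" "S T b f ?c" by blast
    have "(u, if b = v then root T' else b) \<in> edges T2" using E2 b(1) by blast
    moreover have "S T2 (if b = v then root T' else b) f c" using child[OF b(1)] b(2) by simp
    ultimately show "\<exists>w. (u, w) \<in> edges T2 \<and> S T2 w f c" by blast
  qed
  have andd: "(\<forall>w. (u, w) \<in> edges T2 \<longrightarrow> S T2 w f c) \<longleftrightarrow> (\<forall>w. (u, w) \<in> edges T \<longrightarrow> S T w f ?c)"
  proof
    assume A: "\<forall>w. (u, w) \<in> edges T2 \<longrightarrow> S T2 w f c"
    show "\<forall>w. (u, w) \<in> edges T \<longrightarrow> S T w f ?c"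
    proof (intro allI impI)
      fix b assume b: "(u, b) \<in> edges T"
      have "(u, if b = v then root T' else b) \<in> edges T2" using E2 b by blast
      then show "S T b f ?c" using A child[OF b] by simp
    qed
  next
    assume A: "\<forall>w. (u, w) \<in> edges T \<longrightarrow> S T w f ?c"
    show "\<forall>w. (u, w) \<in> edges T2 \<longrightarrow> S T2 w f c"
    proof (intro allI impI)
      fix w assume w: "(u, w) \<in> edges T2"
      then obtain b where b: "(u, b) \<in> edges T" "w = (if b = v then root T' else b)" using E2 by blast
      then show "S T2 w f c" using A child[OF b(1)] by simp
    qed
  qed
  show ?case
  proof (cases "lab T u")
    case GOr then show ?thesis unfolding eq1 eq2 using or by simp
  next
    case GAnd then show ?thesis unfolding eq1 eq2 using andd by simp
  next
    case GBE then show ?thesis unfolding eq1 eq2 by simp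
  next
    case GCBE then show ?thesis unfolding eq1 eq2 using 1(3) by simp
  qed
qed

lemma Sroot: "S T2 (root T2) f c = S T (root T) f (c(v := S T' (root T') f c))"
proof (cases "root T = v")
  case True
  have "S T v f (c(v := S T' (root T') f c)) = S T' (root T') f c"
    using S_unfold[OF dagT, of v f] v_node by simp
  then show ?thesis using True SA root'_in unfolding root2 by simp
next
  case False
  then show ?thesis using SB root_in unfolding root2 by simp
qed

lemma BE_T_out: "x \<in> BE T \<Longrightarrow> x \<notin> nodes T'"
  using agree disj unfolding BE_def by auto

lemma BE2: "BE T2 = BE T \<union> BE T'"
  unfolding BE_def nodes2 lab2 using agree v_node by auto

lemma CBE2: "CBE T2 = (CBE T - {v}) \<union> CBE T'"
  unfolding CBE_def nodes2 lab2 using agree vn by auto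

end



context cset begin

lemma finBE: "finite (BE T)" using finN unfolding BE_def by simp
lemma finBE': "finite (BE T')" using finN' unfolding BE_def by simp

lemma sum_P_one: "(\<Sum>A\<in>Pow (BE T'). (\<Prod>b\<in>A. prob T' b) * (\<Prod>b\<in>BE T' - A. 1 - prob T' b)) = 1"
  using prod_add[OF finBE', of "prob T'" "\<lambda>b. 1 - prob T' b"] by simp

lemma U2: "U T2 c = U T' c * U T (c(v := True)) + (1 - U T' c) * U T (c(v := False))"
proof -
  let ?B1 = "BE T" and ?B2 = "BE T'"
  define P1 where "P1 A = (\<Prod>b\<in>A. prob T b) * (\<Prod>b\<in>?B1 - A. 1 - prob T b)" for A
  define P2 where "P2 A = (\<Prod>b\<in>A. prob T' b) * (\<Prod>b\<in>?B2 - A. 1 - prob T' b)" for A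
  define x where "x A = (if S T' (root T') (\<lambda>b. b \<in> A) c then 1 else 0 :: real)" for A
  define s1 where "s1 A = (if S T (root T) (\<lambda>b. b \<in> A) (c(v := True)) then 1 else 0 :: real)" for A
  define s0 where "s0 A = (if S T (root T) (\<lambda>b. b \<in> A) (c(v := False)) then 1 else 0 :: real)" for A
  let ?h = "\<lambda>p. fst p \<union> snd p"
  have dj: "?B1 \<inter> ?B2 = {}" using disj .
  have inj: "inj_on ?h (Pow ?B1 \<times> Pow ?B2)"
  proof (rule inj_onI)
    fix p q assume p: "p \<in> Pow ?B1 \<times> Pow ?B2" and q: "q \<in> Pow ?B1 \<times> Pow ?B2" and e: "?h p = ?h q"
    have "fst p = ?h p \<inter> ?B1" "snd p = ?h p \<inter> ?B2" using p dj by auto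
    moreover have "fst q = ?h q \<inter> ?B1" "snd q = ?h q \<inter> ?B2" using q dj by auto
    ultimately show "p = q" using e by (simp add: prod_eq_iff)
  qed
  have img: "Pow (?B1 \<union> ?B2) = ?h ` (Pow ?B1 \<times> Pow ?B2)"
  proof
    show "Pow (?B1 \<union> ?B2) \<subseteq> ?h ` (Pow ?B1 \<times> Pow ?B2)"
    proof
      fix A assume A: "A \<in> Pow (?B1 \<union> ?B2)"
      then have "A = ?h (A \<inter> ?B1, A \<inter> ?B2)" by auto
      moreover have "(A \<inter> ?B1, A \<inter> ?B2) \<in> Pow ?B1 \<times> Pow ?B2" by auto
      ultimately show "A \<in> ?h ` (Pow ?B1 \<times> Pow ?B2)" by blast
    qed
  qed auto
  have trm: "(\<Prod>b\<in>A1 \<union> A2. prob T2 b) * (\<Prod>b\<in>BE T2 - (A1 \<union> A2). 1 - prob T2 b) *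
        (if S T2 (root T2) (\<lambda>b. b \<in> A1 \<union> A2) c then 1 else 0)
      = P1 A1 * P2 A2 * (x A2 * s1 A1 + (1 - x A2) * s0 A1)"
    if A1: "A1 \<subseteq> ?B1" and A2: "A2 \<subseteq> ?B2" for A1 A2
  proof -
    have fA1: "finite A1" using A1 finBE finite_subset by blast
    have fA2: "finite A2" using A2 finBE' finite_subset by blast
    have pT: "\<And>b. b \<in> ?B1 \<Longrightarrow> prob T2 b = prob T b" using BE_T_out unfolding prob2 by simp
    have pT': "\<And>b. b \<in> ?B2 \<Longrightarrow> prob T2 b = prob T' b" unfolding prob2 BE_def by simp
    have d12: "A1 \<inter> A2 = {}" using A1 A2 dj by blast
    have "(\<Prod>b\<in>A1 \<union> A2. prob T2 b) = (\<Prod>b\<in>A1. prob T2 b) * (\<Prod>b\<in>A2. prob T2 b)"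
      by (rule prod.union_disjoint) (use fA1 fA2 d12 in auto)
    also have "\<dots> = (\<Prod>b\<in>A1. prob T b) * (\<Prod>b\<in>A2. prob T' b)"
    proof -
      have "(\<Prod>b\<in>A1. prob T2 b) = (\<Prod>b\<in>A1. prob T b)" by (rule prod.cong) (use pT A1 in auto)
      moreover have "(\<Prod>b\<in>A2. prob T2 b) = (\<Prod>b\<in>A2. prob T' b)" by (rule prod.cong) (use pT' A2 in auto)
      ultimately show ?thesis by simp
    qed
    finally have p1: "(\<Prod>b\<in>A1 \<union> A2. prob T2 b) = (\<Prod>b\<in>A1. prob T b) * (\<Prod>b\<in>A2. prob T' b)" .
    have dd: "BE T2 - (A1 \<union> A2) = (?B1 - A1) \<union> (?B2 - A2)" using BE2 dj A1 A2 by auto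
    have "(\<Prod>b\<in>BE T2 - (A1 \<union> A2). 1 - prob T2 b) = (\<Prod>b\<in>?B1 - A1. 1 - prob T2 b) * (\<Prod>b\<in>?B2 - A2. 1 - prob T2 b)"
      unfolding dd by (rule prod.union_disjoint) (use finBE finBE' dj in auto)
    also have "\<dots> = (\<Prod>b\<in>?B1 - A1. 1 - prob T b) * (\<Prod>b\<in>?B2 - A2. 1 - prob T' b)"
      using pT pT' by simp
    finally have p2: "(\<Prod>b\<in>BE T2 - (A1 \<union> A2). 1 - prob T2 b) = (\<Prod>b\<in>?B1 - A1. 1 - prob T b) * (\<Prod>b\<in>?B2 - A2. 1 - prob T' b)" .
    have l2: "S T' (root T') (\<lambda>b. b \<in> A1 \<union> A2) c = S T' (root T') (\<lambda>b. b \<in> A2) c"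
      by (rule S_local[OF dagT' root'_in]) (use A1 dj in auto)
    have l1: "S T (root T) (\<lambda>b. b \<in> A1 \<union> A2) c' = S T (root T) (\<lambda>b. b \<in> A1) c'" for c'
      by (rule S_local[OF dagT root_in]) (use A2 dj in auto)
    have ind: "(if S T2 (root T2) (\<lambda>b. b \<in> A1 \<union> A2) c then 1 else 0 :: real) = x A2 * s1 A1 + (1 - x A2) * s0 A1"
      unfolding Sroot l1 l2 x_def s1_def s0_def by simp
    show ?thesis unfolding p1 p2 ind P1_def P2_def by simp
  qed
  have "U T2 c = (\<Sum>A\<in>Pow (?B1 \<union> ?B2). (\<Prod>b\<in>A. prob T2 b) * (\<Prod>b\<in>BE T2 - A. 1 - prob T2 b) *
      (if S T2 (root T2) (\<lambda>b. b \<in> A) c then 1 else 0))"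
    unfolding U_def BE2 ..
  also have "\<dots> = (\<Sum>p\<in>Pow ?B1 \<times> Pow ?B2. (\<Prod>b\<in>?h p. prob T2 b) * (\<Prod>b\<in>BE T2 - ?h p. 1 - prob T2 b) *
      (if S T2 (root T2) (\<lambda>b. b \<in> ?h p) c then 1 else 0))"
    unfolding img by (subst sum.reindex[OF inj]) simp
  also have "\<dots> = (\<Sum>p\<in>Pow ?B1 \<times> Pow ?B2. P1 (fst p) * P2 (snd p) * (x (snd p) * s1 (fst p) + (1 - x (snd p)) * s0 (fst p)))"
    by (intro sum.cong refl, rule trm) auto
  also have "\<dots> = (\<Sum>A1\<in>Pow ?B1. \<Sum>A2\<in>Pow ?B2. P1 A1 * P2 A2 * (x A2 * s1 A1 + (1 - x A2) * s0 A1))"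
    unfolding sum.cartesian_product by (intro sum.cong refl) (simp add: split_beta)
  also have "\<dots> = (\<Sum>A1\<in>Pow ?B1. P1 A1 * s1 A1 * (\<Sum>A2\<in>Pow ?B2. P2 A2 * x A2)
       + P1 A1 * s0 A1 * ((\<Sum>A2\<in>Pow ?B2. P2 A2) - (\<Sum>A2\<in>Pow ?B2. P2 A2 * x A2)))"
  proof (intro sum.cong refl)
    fix A1
    have "(\<Sum>A2\<in>Pow ?B2. P1 A1 * P2 A2 * (x A2 * s1 A1 + (1 - x A2) * s0 A1))
      = (\<Sum>A2\<in>Pow ?B2. P1 A1 * s1 A1 * (P2 A2 * x A2) + P1 A1 * s0 A1 * (P2 A2 - P2 A2 * x A2))"
      by (intro sum.cong refl) (simp add: algebra_simps)
    also have "\<dots> = P1 A1 * s1 A1 * (\<Sum>A2\<in>Pow ?B2. P2 A2 * x A2)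
       + P1 A1 * s0 A1 * ((\<Sum>A2\<in>Pow ?B2. P2 A2) - (\<Sum>A2\<in>Pow ?B2. P2 A2 * x A2))"
      by (simp add: sum.distrib sum_distrib_left[symmetric] sum_subtractf[symmetric])
    finally show "(\<Sum>A2\<in>Pow ?B2. P1 A1 * P2 A2 * (x A2 * s1 A1 + (1 - x A2) * s0 A1)) = \<dots>" .
  qed
  also have "\<dots> = (\<Sum>A1\<in>Pow ?B1. P1 A1 * s1 A1) * U T' c + (\<Sum>A1\<in>Pow ?B1. P1 A1 * s0 A1) * (1 - U T' c)"
  proof -
    have u': "U T' c = (\<Sum>A2\<in>Pow ?B2. P2 A2 * x A2)" unfolding U_def P2_def x_def by simp
    have one: "(\<Sum>A2\<in>Pow ?B2. P2 A2) = 1" using sum_P_one unfolding P2_def .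
    show ?thesis unfolding u' one by (simp add: sum.distrib sum_distrib_right)
  qed
  also have "(\<Sum>A1\<in>Pow ?B1. P1 A1 * s1 A1) = U T (c(v := True))" unfolding U_def P1_def s1_def by simp
  also have "(\<Sum>A1\<in>Pow ?B1. P1 A1 * s0 A1) = U T (c(v := False))" unfolding U_def P1_def s0_def by simp
  finally have "U T2 c = U T (c(v := True)) * U T' c + U T (c(v := False)) * (1 - U T' c)" .
  then show ?thesis by (simp only: mult.commute)
qed

end



context cset begin

lemma main:
  "CBE T2 = (CBE T - {v}) \<union> CBE T' \<and>
   rep (CBE T2) (U T2) = sq_subst (rep (CBE T) (U T)) v (rep (CBE T') (U T'))"
proof
  show "CBE T2 = (CBE T - {v}) \<union> CBE T'" by (rule CBE2)
  define X where "X = CBE T"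
  define X' where "X' = CBE T'"
  define X2 where "X2 = CBE T2"
  have fX: "finite X" unfolding X_def CBE_def using finN by simp
  have fX': "finite X'" unfolding X'_def CBE_def using finN' by simp
  have X2e: "X2 = (X - {v}) \<union> X'" unfolding X2_def X_def X'_def by (rule CBE2)
  have fX2: "finite X2" using X2e fX fX' by simp
  have vX: "v \<in> X" unfolding X_def using vC .
  define a where "a = rep X (U T)"
  define b where "b = rep X' (U T')"
  have ap: "in_alg X a" "\<forall>c. U T c = sq_eval X a c"
    using rep_prop[OF fX U_local[OF P, folded X_def]] unfolding a_def by auto
  have bp: "in_alg X' b" "\<forall>c. U T' c = sq_eval X' b c"
    using rep_prop[OF fX' U_local[OF P', folded X'_def]] unfolding b_def by auto
  define a1 where "a1 = (\<lambda>W. if v \<notin> W then a (insert v W) else 0)"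
  define a0 where "a0 = (\<lambda>W. if v \<notin> W then a W else 0)"
  have g: "sq_subst a v b = sq_add (sq_mult b a1) a0" unfolding sq_subst_def a1_def a0_def ..
  have a1A: "in_alg (X - {v}) a1" unfolding in_alg_def
  proof (intro allI impI)
    fix W assume "a1 W \<noteq> 0"
    then have "v \<notin> W" "a (insert v W) \<noteq> 0" unfolding a1_def by (auto split: if_splits)
    then show "W \<subseteq> X - {v}" using ap(1) unfolding in_alg_def by blast
  qed
  have a0A: "in_alg (X - {v}) a0" unfolding in_alg_def
  proof (intro allI impI)
    fix W assume "a0 W \<noteq> 0"
    then have "v \<notin> W" "a W \<noteq> 0" unfolding a0_def by (auto split: if_splits)
    then show "W \<subseteq> X - {v}" using ap(1) unfolding in_alg_def by blast
  qed
  have sub1: "X - {v} \<subseteq> X2" and sub2: "X' \<subseteq> X2" using X2e by auto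
  have gA: "in_alg X2 (sq_subst a v b)"
    unfolding g
    by (intro in_alg_add in_alg_mult in_alg_mono[OF a1A sub1] in_alg_mono[OF a0A sub1] in_alg_mono[OF bp(1) sub2])
  have fXv: "finite (X - {v})" using fX by simp
  have UTb: "U T (c(v := bb)) = sq_eval (X - {v}) a0 c + (if bb then 1 else 0) * sq_eval (X - {v}) a1 c" for c bb
  proof -
    have Xi: "X = insert v (X - {v})" using vX by auto
    have fY: "\<And>Y. Y \<in> Pow (X - {v}) \<Longrightarrow> finite Y" using fXv finite_subset by auto
    have "U T (c(v := bb)) = sq_eval X a (c(v := bb))" using ap(2) by simp
    also have "\<dots> = (\<Sum>Y\<in>Pow (X - {v}). a Y * (\<Prod>x\<in>Y. if (c(v := bb)) x then 1 else 0))
        + (\<Sum>Y\<in>Pow (X - {v}). a (insert v Y) * (\<Prod>x\<in>insert v Y. if (c(v := bb)) x then 1 else 0))"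
      unfolding sq_eval_def by (subst Xi, rule sum_Pow_insert[OF fXv]) simp
    also have "(\<Sum>Y\<in>Pow (X - {v}). a Y * (\<Prod>x\<in>Y. if (c(v := bb)) x then 1 else 0)) = sq_eval (X - {v}) a0 c"
      unfolding sq_eval_def
    proof (intro sum.cong refl)
      fix Y assume Y: "Y \<in> Pow (X - {v})"
      then have vY: "v \<notin> Y" by auto
      have "(\<Prod>x\<in>Y. if (c(v := bb)) x then 1 else 0 :: real) = (\<Prod>x\<in>Y. if c x then 1 else 0)"
        by (rule prod.cong) (use vY in auto)
      then show "a Y * (\<Prod>x\<in>Y. if (c(v := bb)) x then 1 else 0) = a0 Y * (\<Prod>x\<in>Y. if c x then 1 else 0)"
        unfolding a0_def using vY by simp
    qed
    also have "(\<Sum>Y\<in>Pow (X - {v}). a (insert v Y) * (\<Prod>x\<in>insert v Y. if (c(v := bb)) x then 1 else 0))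
        = (if bb then 1 else 0) * sq_eval (X - {v}) a1 c"
      unfolding sq_eval_def sum_distrib_left
    proof (intro sum.cong refl)
      fix Y assume Y: "Y \<in> Pow (X - {v})"
      then have vY: "v \<notin> Y" by auto
      have "(\<Prod>x\<in>Y. if (c(v := bb)) x then 1 else 0 :: real) = (\<Prod>x\<in>Y. if c x then 1 else 0)"
        by (rule prod.cong) (use vY in auto)
      moreover have "(\<Prod>x\<in>insert v Y. if (c(v := bb)) x then 1 else 0 :: real)
          = (if bb then 1 else 0) * (\<Prod>x\<in>Y. if (c(v := bb)) x then 1 else 0)"
        using fY[OF Y] vY by simp
      ultimately show "a (insert v Y) * (\<Prod>x\<in>insert v Y. if (c(v := bb)) x then 1 else 0) =
          (if bb then 1 else 0) * (a1 Y * (\<Prod>x\<in>Y. if c x then 1 else 0))"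
        unfolding a1_def using vY by simp
    qed
    finally show ?thesis .
  qed
  have ev: "U T2 c = sq_eval X2 (sq_subst a v b) c" for c
  proof -
    have "sq_eval X2 (sq_subst a v b) c = sq_eval X2 b c * sq_eval X2 a1 c + sq_eval X2 a0 c"
      unfolding g sq_eval_add sq_eval_mult[OF fX2] ..
    also have "\<dots> = U T' c * sq_eval (X - {v}) a1 c + sq_eval (X - {v}) a0 c"
      using sq_eval_mono[OF bp(1) sub2 fX2] sq_eval_mono[OF a1A sub1 fX2] sq_eval_mono[OF a0A sub1 fX2] bp(2)
      by simp
    finally have e: "sq_eval X2 (sq_subst a v b) c = U T' c * sq_eval (X - {v}) a1 c + sq_eval (X - {v}) a0 c" .
    show ?thesis unfolding e U2 UTb by (simp add: algebra_simps)
  qed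
  have "rep X2 (U T2) = sq_subst a v b"
    by (rule rep_eq[OF fX2 gA]) (use ev in blast)
  then show "rep (CBE T2) (U T2) = sq_subst (rep (CBE T) (U T)) v (rep (CBE T') (U T'))"
    unfolding X2_def a_def b_def X_def X'_def .
qed

end

theorem theorem26:
  fixes T T' :: "'a pcft" and v :: 'a
  assumes "is_pcft T" and "is_pcft T'"
    and "\<forall>u\<in>nodes T \<inter> nodes T'. lab T u = lab T' u \<and>
           (\<forall>w. (u, w) \<in> edges T \<longleftrightarrow> (u, w) \<in> edges T') \<and>
           (lab T u = GBE \<longrightarrow> prob T u = prob T' u)"
    and "v \<in> CBE T" and "v \<notin> nodes T'"
    and "BE T \<inter> BE T' = {}"
  shows "CBE (compose T v T') = (CBE T - {v}) \<union> CBE T' \<and>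
         rep (CBE (compose T v T')) (U (compose T v T')) =
           sq_subst (rep (CBE T) (U T)) v (rep (CBE T') (U T'))"
proof -
  interpret cset T T' v using assms by (unfold_locales) auto
  show ?thesis by (rule main)
qed

end
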